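(* Let $S_{r,N}$ be a nontrivial atomic exponential Puiseux semiring with $r>1$. Let $x\in S_{r,N}$ and $k\in\mathbb{N}$ be such that $r^{s_k}$ divides $x$ in $S_{r,N}$. Then for every factorization $z=\sum_{i=0}^{n}c_ir^{s_i}\in\mathsf{Z}(x)$ (with $c_0,\dots,c_n\in\mathbb{N}$), either $r^{s_k}$ divides $\sum_{i=0}^{k}c_ir^{s_i}$ in $S_{r,N}$ or $r^{s_k}$ divides $\sum_{i=k+1}^{n}c_ir^{s_i}$ in $S_{r,N}$.
   Context: $\mathbb{N}=\{0,1,2,\dots\}$. A numerical monoid $N$ is an additive submonoid of $\mathbb{N}$ with finite complement in $\mathbb{N}$; let $s_0<s_1<\cdots$ be its elements. For $r\in\mathbb{Q}_{>0}$ write $r=\mathsf{n}(r)/\mathsf{d}(r)$ in lowest terms. The exponential Puiseux semiring $S_{r,N}$ is the additive submonoid of $\mathbb{Q}_{\ge0}$ generated by $\{r^k:k\in N\}$; nontrivial means $r\notin\mathbb{N}$, and then it is atomic iff $\mathsf{n}(r)>1$, with atoms $r^s$, $s\in N$. In a monoid $M$, $y$ divides $w$ (written $y\mid_M w$) if $w=y+y'$ for some $y'\in M$. $\mathsf{Z}(x)$ denotes the set of factorizations of $x$ into atoms. *)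

theory Defs
  imports Complex_Main "HOL-Library.Infinite_Set"
begin

definition numerical_monoid :: "nat set \<Rightarrow> bool" where
  "numerical_monoid N \<longleftrightarrow> 0 \<in> N \<and> (\<forall>a\<in>N. \<forall>b\<in>N. a + b \<in> N) \<and> finite (UNIV - N)"

text \<open>s_k: the k-th element (in increasing order) of N, starting with s_0.\<close>
definition nm_elem :: "nat set \<Rightarrow> nat \<Rightarrow> nat" where
  "nm_elem N k = enumerate N k"

inductive_set exp_puiseux :: "rat \<Rightarrow> nat set \<Rightarrow> rat set" for r N where
  zero: "0 \<in> exp_puiseux r N"
| gen: "k \<in> N \<Longrightarrow> r ^ k \<in> exp_puiseux r N"
| add: "a \<in> exp_puiseux r N \<Longrightarrow> b \<in> exp_puiseux r N \<Longrightarrow> a + b \<in> exp_puiseux r N"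

definition mdvd :: "rat set \<Rightarrow> rat \<Rightarrow> rat \<Rightarrow> bool" where
  "mdvd M y w \<longleftrightarrow> (\<exists>y'\<in>M. w = y + y')"

definition rat_num :: "rat \<Rightarrow> int" where
  "rat_num r = fst (quotient_of r)"

end

theory Submission
  imports Defs
begin

definition lowP :: "int \<Rightarrow> nat \<Rightarrow> rat \<Rightarrow> bool" where
  "lowP q t u \<longleftrightarrow> (\<exists>m::int. u * of_int q ^ t = of_int m)"

definition highP :: "int \<Rightarrow> int \<Rightarrow> nat \<Rightarrow> rat \<Rightarrow> bool" where
  "highP p q t v \<longleftrightarrow> (\<exists>m::int. \<exists>f::nat. v * of_int q ^ t * of_int q ^ f = of_int p ^ (t+1) * of_int m)"

lemma lowP_0: "lowP q t 0" unfolding lowP_def by (rule exI[of _ 0]) simp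

lemma lowP_add: "lowP q t a \<Longrightarrow> lowP q t b \<Longrightarrow> lowP q t (a + b)"
  unfolding lowP_def by (metis distrib_right of_int_add)

lemma lowP_diff: "lowP q t a \<Longrightarrow> lowP q t b \<Longrightarrow> lowP q t (a - b)"
  unfolding lowP_def by (metis left_diff_distrib of_int_diff)

lemma highP_0: "highP p q t 0" unfolding highP_def by (rule exI[of _ 0]) simp

lemma highP_diff:
  assumes "highP p q t a" "highP p q t b" shows "highP p q t (a - b)"
proof -
  obtain m1 f1 where 1: "a * of_int q ^ t * of_int q ^ f1 = of_int p ^ (t+1) * of_int m1"
    using assms(1) unfolding highP_def by blast
  obtain m2 f2 where 2: "b * of_int q ^ t * of_int q ^ f2 = of_int p ^ (t+1) * of_int m2"
    using assms(2) unfolding highP_def by blast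
  have "(a - b) * of_int q ^ t * of_int q ^ (f1 + f2) =
      (a * of_int q ^ t * of_int q ^ f1) * of_int q ^ f2 - (b * of_int q ^ t * of_int q ^ f2) * of_int q ^ f1"
    by (simp add: power_add algebra_simps)
  also have "\<dots> = of_int p ^ (t+1) * of_int (m1 * q ^ f2 - m2 * q ^ f1)"
    unfolding 1 2 by (simp add: algebra_simps)
  finally show ?thesis unfolding highP_def by blast
qed

lemma highP_add:
  assumes "highP p q t a" "highP p q t b" shows "highP p q t (a + b)"
proof -
  have "highP p q t (0 - b)" using highP_diff[OF highP_0 assms(2)] .
  from highP_diff[OF assms(1) this] show ?thesis by simp
qed

lemma closed_sum:
  assumes "0 \<in> M" "\<And>a b. a \<in> M \<Longrightarrow> b \<in> M \<Longrightarrow> a + b \<in> M" "finite I" "\<And>i. i \<in> I \<Longrightarrow> f i \<in> M"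
  shows "sum f I \<in> M"
  using assms(3,4)
proof (induction I rule: finite_induct)
  case empty then show ?case using assms(1) by simp
next
  case (insert x F) then show ?case using assms(2) by simp
qed

lemma closed_mult:
  assumes "0 \<in> M" "\<And>a b. a \<in> M \<Longrightarrow> b \<in> M \<Longrightarrow> a + b \<in> M" "a \<in> M"
  shows "(of_nat c :: rat) * a \<in> M"
proof (induction c)
  case 0 then show ?case using assms(1) by simp
next
  case (Suc c) then show ?case using assms(2)[OF assms(3) Suc] by (simp add: algebra_simps)
qed

theorem mainTheorem13:
  fixes r :: rat and N :: "nat set" and x :: rat and k n :: nat and c :: "nat \<Rightarrow> nat"
  assumes "numerical_monoid N"
    and "r > 0" and "r \<notin> \<nat>" and "rat_num r > 1"
    and "r > 1"
    and "x \<in> exp_puiseux r N"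
    and "mdvd (exp_puiseux r N) (r ^ nm_elem N k) x"
    and "\<forall>i>n. c i = 0"
    and "x = (\<Sum>i\<le>n. of_nat (c i) * r ^ nm_elem N i)"
  shows "mdvd (exp_puiseux r N) (r ^ nm_elem N k) (\<Sum>i\<le>k. of_nat (c i) * r ^ nm_elem N i)
       \<or> mdvd (exp_puiseux r N) (r ^ nm_elem N k) (\<Sum>i\<in>{k<..n}. of_nat (c i) * r ^ nm_elem N i)"
proof -
  let ?S = "exp_puiseux r N"
  define t where "t = nm_elem N k"
  obtain p q where pq: "quotient_of r = (p, q)" by (cases "quotient_of r") auto
  have qpos: "q > 0" using quotient_of_denom_pos[OF pq] .
  have cop: "coprime p q" using quotient_of_coprime[OF pq] .
  have rdef: "r = of_int p / of_int q" using quotient_of_div[OF pq] .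
  have rq: "r * of_int q = of_int p" using qpos rdef by simp
  have ppos: "p > 0"
  proof -
    have "(0::rat) < r * of_int q" using assms(2) qpos by simp
    then show ?thesis using rq by simp
  qed
  have inf: "infinite N"
  proof
    assume "finite N"
    then have "finite (N \<union> (UNIV - N))" using assms(1) unfolding numerical_monoid_def by blast
    then show False by simp
  qed
  have elemN: "nm_elem N i \<in> N" for i unfolding nm_elem_def using enumerate_in_set[OF inf] .
  have S0: "0 \<in> ?S" by (rule exp_puiseux.zero)
  have Sadd: "a \<in> ?S \<Longrightarrow> b \<in> ?S \<Longrightarrow> a + b \<in> ?S" for a b by (rule exp_puiseux.add)
  have rpow: "r ^ s * of_int q ^ s = of_int p ^ s" for s
    using rq by (metis power_mult_distrib of_int_power)
  have low_gen: "lowP q t (r ^ s)" if "s \<le> t" for s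
  proof -
    have "r ^ s * of_int q ^ t = r ^ s * of_int q ^ s * of_int q ^ (t - s)"
      using that by (simp add: power_add[symmetric])
    also have "\<dots> = of_int (p ^ s * q ^ (t - s))" using rpow by simp
    finally show ?thesis unfolding lowP_def by blast
  qed
  have high_gen: "highP p q t (r ^ s)" if "t < s" for s
  proof -
    have "r ^ s * of_int q ^ t * of_int q ^ (s - t) = r ^ s * of_int q ^ s"
      using that by (simp add: mult.assoc power_add[symmetric])
    also have "\<dots> = of_int p ^ s" using rpow by simp
    also have "\<dots> = of_int p ^ (t+1) * of_int (p ^ (s - t - 1))"
    proof -
      have "s = (t+1) + (s - t - 1)" using that by simp
      then have "(of_int p::rat) ^ s = of_int p ^ (t+1) * of_int p ^ (s - t - 1)"
        by (metis power_add)
      then show ?thesis by simp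
    qed
    finally show ?thesis unfolding highP_def by blast
  qed
  have decomp: "\<exists>L H. y = L + H \<and> L \<in> ?S \<and> H \<in> ?S \<and> lowP q t L \<and> highP p q t H"
    if "y \<in> ?S" for y
    using that
  proof (induction rule: exp_puiseux.induct)
    case zero
    then show ?case using S0 lowP_0 highP_0 by (intro exI[of _ 0]) simp
  next
    case (gen s)
    show ?case
    proof (cases "s \<le> t")
      case True
      then show ?thesis using exp_puiseux.gen[OF gen] S0 low_gen highP_0
        by (intro exI[of _ "r ^ s"] exI[of _ 0]) simp
    next
      case False
      then show ?thesis using exp_puiseux.gen[OF gen] S0 high_gen lowP_0
        by (intro exI[of _ 0] exI[of _ "r ^ s"]) simp
    qed
  next
    case (add a b)
    then obtain L1 H1 L2 H2 where "a = L1 + H1" "L1 \<in> ?S" "H1 \<in> ?S" "lowP q t L1" "highP p q t H1"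
      "b = L2 + H2" "L2 \<in> ?S" "H2 \<in> ?S" "lowP q t L2" "highP p q t H2" by blast
    then show ?case using Sadd lowP_add highP_add
      by (intro exI[of _ "L1 + L2"] exI[of _ "H1 + H2"]) (simp add: algebra_simps)
  qed
  define A where "A = (\<Sum>i\<le>k. of_nat (c i) * r ^ nm_elem N i)"
  define B where "B = (\<Sum>i\<in>{k<..n}. of_nat (c i) * r ^ nm_elem N i)"
  have rtS: "r ^ t \<in> ?S" unfolding t_def using elemN by (rule exp_puiseux.gen)
  have termS: "of_nat (c i) * r ^ nm_elem N i \<in> ?S" for i
    by (rule closed_mult[where M = ?S]) (use S0 Sadd elemN exp_puiseux.gen in auto)
  have AS: "A \<in> ?S" unfolding A_def
    by (rule closed_sum[where M = ?S]) (use S0 Sadd termS in auto)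
  have BS: "B \<in> ?S" unfolding B_def
    by (rule closed_sum[where M = ?S]) (use S0 Sadd termS in auto)
  have Alow: "lowP q t A" unfolding A_def
  proof (rule closed_sum[where M = "{u. lowP q t u}", simplified])
    show "lowP q t 0" by (rule lowP_0)
    show "lowP q t (a + b)" if "lowP q t a" "lowP q t b" for a b using lowP_add that .
    show "lowP q t (of_nat (c i) * r ^ nm_elem N i)" if "i \<in> {..k}" for i
    proof (rule closed_mult[where M = "{u. lowP q t u}", simplified])
      show "lowP q t 0" by (rule lowP_0)
      show "lowP q t (a + b)" if "lowP q t a" "lowP q t b" for a b using lowP_add that .
      show "lowP q t (r ^ nm_elem N i)"
        by (rule low_gen) (use that inf in \<open>simp add: t_def nm_elem_def\<close>)
    qed
  qed simp
  have Bhigh: "highP p q t B" unfolding B_def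
  proof (rule closed_sum[where M = "{u. highP p q t u}", simplified])
    show "highP p q t 0" by (rule highP_0)
    show "highP p q t (a + b)" if "highP p q t a" "highP p q t b" for a b using highP_add that .
    show "highP p q t (of_nat (c i) * r ^ nm_elem N i)" if "i \<in> {k<..n}" for i
    proof (rule closed_mult[where M = "{u. highP p q t u}", simplified])
      show "highP p q t 0" by (rule highP_0)
      show "highP p q t (a + b)" if "highP p q t a" "highP p q t b" for a b using highP_add that .
      show "highP p q t (r ^ nm_elem N i)"
        by (rule high_gen) (use that inf in \<open>simp add: t_def nm_elem_def\<close>)
    qed
  qed simp
  have xAB: "x = A + B"
  proof (cases "k \<le> n")
    case True
    have "{..n} = {..k} \<union> {k<..n}" using True by auto
    then show ?thesis unfolding assms(9) A_def B_def
      by (metis (no_types, lifting) sum.union_disjoint finite_atMost finite_greaterThanAtMost disjoint_iff greaterThan_iff atMost_iff greaterThanAtMost_iff not_le)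
  next
    case False
    have "A = (\<Sum>i\<le>n. of_nat (c i) * r ^ nm_elem N i)" unfolding A_def
      using False assms(8) by (intro sum.mono_neutral_right) auto
    moreover have "B = 0" unfolding B_def using False by simp
    ultimately show ?thesis using assms(9) by simp
  qed
  obtain y where y: "y \<in> ?S" "x = r ^ t + y" using assms(7) unfolding mdvd_def t_def by blast
  obtain L H where LH: "y = L + H" "L \<in> ?S" "H \<in> ?S" "lowP q t L" "highP p q t H"
    using decomp[OF y(1)] by blast
  define d where "d = B - H"
  have d2: "d = r ^ t + L - A" using xAB y(2) LH(1) unfolding d_def by simp
  have dlow: "lowP q t d" unfolding d2
    using lowP_diff[OF lowP_add[OF low_gen[OF order_refl] LH(4)] Alow] .
  have dhigh: "highP p q t d" unfolding d_def using highP_diff[OF Bhigh LH(5)] .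
  obtain D where D: "d * of_int q ^ t = of_int D" using dlow unfolding lowP_def by blast
  obtain m f where mf: "d * of_int q ^ t * of_int q ^ f = of_int p ^ (t+1) * of_int m"
    using dhigh unfolding highP_def by blast
  have "of_int (D * q ^ f) = (of_int (p ^ (t+1) * m) :: rat)" using D mf by simp
  then have Dq: "D * q ^ f = p ^ (t+1) * m" by (rule of_int_eq_iff[THEN iffD1])
  have "coprime (p ^ (t+1)) (q ^ f)" using cop by simp
  then have "p ^ (t+1) dvd D"
    using Dq by (metis coprime_dvd_mult_left_iff dvd_triv_left)
  then obtain \<rho> where rho: "D = p ^ (t+1) * \<rho>" by blast
  have drho: "d = of_int (p * \<rho>) * r ^ t"
  proof -
    have "d * of_int q ^ t = of_int (p * \<rho>) * (r ^ t * of_int q ^ t)"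
      using D rho rpow[of t] by (simp add: algebra_simps)
    then show ?thesis using qpos by (simp add: algebra_simps)
  qed
  show ?thesis
  proof (cases "\<rho> \<ge> 1")
    case True
    have pr: "p * \<rho> - 1 \<ge> 0" using mult_mono[of 1 p 1 \<rho>] True ppos by simp
    define e where "e = nat (p * \<rho> - 1)"
    have "B = r ^ t + (H + of_nat e * r ^ t)"
    proof -
      have "of_nat e = (of_int (p * \<rho>) :: rat) - 1" unfolding e_def using pr by simp
      then have "(of_int (p * \<rho>) :: rat) = 1 + of_nat e" by simp
      moreover have "B = H + of_int (p * \<rho>) * r ^ t" using drho unfolding d_def by simp
      ultimately show ?thesis by (simp add: algebra_simps)
    qed
    moreover have "H + of_nat e * r ^ t \<in> ?S"
      using Sadd[OF LH(3) closed_mult[where M = ?S, OF S0 Sadd rtS]] .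
    ultimately show ?thesis unfolding mdvd_def B_def[symmetric] t_def[symmetric] by blast
  next
    case False
    define e where "e = nat (- (p * \<rho>))"
    have ne: "- (p * \<rho>) \<ge> 0" using False ppos mult_nonneg_nonpos[of p \<rho>] by simp
    have "A = r ^ t + (L + of_nat e * r ^ t)"
    proof -
      have "of_nat e = - (of_int (p * \<rho>) :: rat)" unfolding e_def using ne by simp
      moreover have "A = r ^ t + L - of_int (p * \<rho>) * r ^ t" using drho d2 by simp
      ultimately show ?thesis by (simp add: algebra_simps)
    qed
    moreover have "L + of_nat e * r ^ t \<in> ?S"
      using Sadd[OF LH(2) closed_mult[where M = ?S, OF S0 Sadd rtS]] .
    ultimately show ?thesis unfolding mdvd_def A_def[symmetric] t_def[symmetric] by blast
  qed
qed

end
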